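(* Let a $d$-dimensional Hegselmann–Krause system with $n$ agents, confidence bound $\varepsilon>0$, arbitrary initial positions, and social network the complete graph $K_n$ evolve under uniform random asynchronous updates, and let $\delta>0$. Then the expected convergence time to a $\delta$-stable state is at most $\operatorname{O}\big(n^3(n^2+(\varepsilon/\delta)^2)\big)$.
   Context: A $d$-dimensional Hegselmann–Krause system (HKS) consists of a finite undirected graph $G=(V,E)$ (the social network) whose $n=|V|$ nodes are agents, a confidence bound $\varepsilon>0$, and initial positions $x_v(0)\in\mathbb{R}^d$. In a state (positions $x_v$), the influencing neighborhood of $v$ is $N_v=\{u:\{u,v\}\in E,\ \|x_u-x_v\|_2\le\varepsilon\}\cup\{v\}$; the influence network is $(V,E_I)$ with $E_I=\{\{u,v\}\in E:\|x_u-x_v\|_2\le\varepsilon\}$; the length of an edge $\{u,v\}$ is $\|x_u-x_v\|_2$. Uniform random asynchronous updates: at each step $t$ one agent $v$ is chosen uniformly at random (independently) and set to $x_v(t+1)=\frac{1}{|N_v(t)|}\sum_{u\in N_v(t)}x_u(t)$, all others unchanged. A state is $\delta$-stable if every edge of the influence network has length at most $\delta$; the convergence time is the number of steps until a $\delta$-stable state is first reached. Constants in the $\operatorname{O}$-notation are absolute. *)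

theory Defs
  imports "HOL-Probability.Probability"
begin

text \<open>Agents are 0..n-1; a state is a map from agents to points of R^d, where a point
  is a function nat => real of which only the coordinates 0..d-1 are relevant.
  The social network is the complete graph K_n.\<close>

definition hk_dist :: "nat \<Rightarrow> (nat \<Rightarrow> real) \<Rightarrow> (nat \<Rightarrow> real) \<Rightarrow> real" where
  "hk_dist d p q = sqrt (\<Sum>i<d. (p i - q i)^2)"

definition hk_nbhd :: "nat \<Rightarrow> nat \<Rightarrow> real \<Rightarrow> (nat \<Rightarrow> nat \<Rightarrow> real) \<Rightarrow> nat \<Rightarrow> nat set" where
  "hk_nbhd n d \<epsilon> x v = {u. u < n \<and> hk_dist d (x u) (x v) \<le> \<epsilon>}"

definition hk_update :: "nat \<Rightarrow> nat \<Rightarrow> real \<Rightarrow> (nat \<Rightarrow> nat \<Rightarrow> real) \<Rightarrow> nat \<Rightarrow> (nat \<Rightarrow> nat \<Rightarrow> real)" where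
  "hk_update n d \<epsilon> x v =
     x(v := (\<lambda>i. (\<Sum>u\<in>hk_nbhd n d \<epsilon> x v. x u i) / real (card (hk_nbhd n d \<epsilon> x v))))"

primrec hk_traj :: "nat \<Rightarrow> nat \<Rightarrow> real \<Rightarrow> (nat \<Rightarrow> nat \<Rightarrow> real) \<Rightarrow> nat stream \<Rightarrow> nat \<Rightarrow> (nat \<Rightarrow> nat \<Rightarrow> real)" where
  "hk_traj n d \<epsilon> x0 \<omega> 0 = x0"
| "hk_traj n d \<epsilon> x0 \<omega> (Suc t) = hk_update n d \<epsilon> (hk_traj n d \<epsilon> x0 \<omega> t) (\<omega> !! t)"

definition hk_stable :: "nat \<Rightarrow> nat \<Rightarrow> real \<Rightarrow> real \<Rightarrow> (nat \<Rightarrow> nat \<Rightarrow> real) \<Rightarrow> bool" where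
  "hk_stable n d \<epsilon> \<delta> x \<longleftrightarrow>
     (\<forall>u<n. \<forall>v<n. u \<noteq> v \<longrightarrow> hk_dist d (x u) (x v) \<le> \<epsilon> \<longrightarrow> hk_dist d (x u) (x v) \<le> \<delta>)"

definition hk_time :: "nat \<Rightarrow> nat \<Rightarrow> real \<Rightarrow> real \<Rightarrow> (nat \<Rightarrow> nat \<Rightarrow> real) \<Rightarrow> nat stream \<Rightarrow> ennreal" where
  "hk_time n d \<epsilon> \<delta> x0 \<omega> =
     (if \<exists>t. hk_stable n d \<epsilon> \<delta> (hk_traj n d \<epsilon> x0 \<omega> t)
      then of_nat (LEAST t. hk_stable n d \<epsilon> \<delta> (hk_traj n d \<epsilon> x0 \<omega> t)) else \<infinity>)"

definition hk_space :: "nat \<Rightarrow> nat stream measure" where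
  "hk_space n = stream_space (measure_pmf (pmf_of_set {..<n}))"

end

theory Submission
  imports Defs
begin


lemma traj_Suc': "hk_traj n d \<epsilon> x \<omega> (Suc t) = hk_traj n d \<epsilon> (hk_update n d \<epsilon> x (shd \<omega>)) (stl \<omega>) t"
  by (induction t) simp_all

definition notst :: "nat \<Rightarrow> nat \<Rightarrow> real \<Rightarrow> real \<Rightarrow> (nat \<Rightarrow> nat \<Rightarrow> real) \<Rightarrow> nat stream \<Rightarrow> nat \<Rightarrow> bool" where
  "notst n d \<epsilon> \<delta> x \<omega> s = (\<forall>s'\<le>s. \<not> hk_stable n d \<epsilon> \<delta> (hk_traj n d \<epsilon> x \<omega> s'))"

lemma notst_0: "notst n d \<epsilon> \<delta> x \<omega> 0 = (\<not> hk_stable n d \<epsilon> \<delta> x)"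
  by (simp add: notst_def)

lemma notst_Suc: "notst n d \<epsilon> \<delta> x \<omega> (Suc s) =
   (\<not> hk_stable n d \<epsilon> \<delta> x \<and> notst n d \<epsilon> \<delta> (hk_update n d \<epsilon> x (shd \<omega>)) (stl \<omega>) s)"
  unfolding notst_def
proof safe
  fix s' assume a: "\<forall>s'\<le>Suc s. \<not> hk_stable n d \<epsilon> \<delta> (hk_traj n d \<epsilon> x \<omega> s')"
  show "hk_stable n d \<epsilon> \<delta> x \<Longrightarrow> False" using a[rule_format, of 0] by simp
  show "s' \<le> s \<Longrightarrow> hk_stable n d \<epsilon> \<delta> (hk_traj n d \<epsilon> (hk_update n d \<epsilon> x (shd \<omega>)) (stl \<omega>) s') \<Longrightarrow> False"
    using a[rule_format, of "Suc s'"] by (simp only: traj_Suc') simp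
next
  fix s' assume a: "\<not> hk_stable n d \<epsilon> \<delta> x" "\<forall>s'\<le>s. \<not> hk_stable n d \<epsilon> \<delta> (hk_traj n d \<epsilon> (hk_update n d \<epsilon> x (shd \<omega>)) (stl \<omega>) s')"
    and s': "s' \<le> Suc s" "hk_stable n d \<epsilon> \<delta> (hk_traj n d \<epsilon> x \<omega> s')"
  show False
  proof (cases s')
    case 0 then show ?thesis using a s' by simp
  next
    case (Suc s'') then show ?thesis using a(2)[rule_format, of s''] s' by (simp only: traj_Suc')
  qed
qed

lemma time_eq: "hk_time n d \<epsilon> \<delta> x \<omega> = (\<Sum>s. if notst n d \<epsilon> \<delta> x \<omega> s then 1 else 0 :: ennreal)"
proof (cases "\<exists>t. hk_stable n d \<epsilon> \<delta> (hk_traj n d \<epsilon> x \<omega> t)")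
  case True
  define t0 where "t0 = (LEAST t. hk_stable n d \<epsilon> \<delta> (hk_traj n d \<epsilon> x \<omega> t))"
  have st: "hk_stable n d \<epsilon> \<delta> (hk_traj n d \<epsilon> x \<omega> t0)" unfolding t0_def using True by (metis LeastI)
  have iff: "notst n d \<epsilon> \<delta> x \<omega> s \<longleftrightarrow> s < t0" for s
  proof
    assume "notst n d \<epsilon> \<delta> x \<omega> s" then show "s < t0" using st unfolding notst_def
      by (meson not_less)
  next
    assume "s < t0" then show "notst n d \<epsilon> \<delta> x \<omega> s" unfolding notst_def t0_def
      using not_less_Least by (metis le_less_trans)
  qed
  have "(\<Sum>s. if notst n d \<epsilon> \<delta> x \<omega> s then 1 else 0 :: ennreal) = (\<Sum>s<t0. if notst n d \<epsilon> \<delta> x \<omega> s then 1 else 0)"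
    by (rule suminf_finite) (auto simp: iff)
  also have "\<dots> = of_nat t0" by (simp add: iff)
  finally show ?thesis using True unfolding hk_time_def t0_def by simp
next
  case False
  then have "notst n d \<epsilon> \<delta> x \<omega> s" for s unfolding notst_def by auto
  then have "(\<Sum>s. if notst n d \<epsilon> \<delta> x \<omega> s then 1 else 0 :: ennreal) = (\<Sum>s. ennreal 1)" by simp
  also have "\<dots> = \<top>" by (rule summable_iff_suminf_neq_top) (auto simp: summable_const_iff)
  finally show ?thesis using False unfolding hk_time_def by simp
qed

lemma shd_meas[measurable]: "shd \<in> measurable (hk_space n) (count_space UNIV)"
    unfolding hk_space_def
    using measurable_shd[of "measure_pmf (pmf_of_set {..<n})"]
    by (simp add: measurable_cong_sets[OF refl sets_measure_pmf_count_space])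

lemma stl_meas[measurable]: "stl \<in> measurable (hk_space n) (hk_space n)"
  unfolding hk_space_def by (rule measurable_stl)

lemma meas_notst[measurable]: "Measurable.pred (hk_space n) (\<lambda>\<omega>. notst n d \<epsilon> \<delta> x \<omega> s)"
proof (induction s arbitrary: x)
  case 0 then show ?case by (simp add: notst_0)
next
  case (Suc s)
  have g: "shd \<in> measurable (hk_space n) (count_space UNIV)"
    unfolding hk_space_def
    using measurable_shd[of "measure_pmf (pmf_of_set {..<n})"]
    by (simp add: measurable_cong_sets[OF refl sets_measure_pmf_count_space])
  have "(\<lambda>\<omega>. (\<lambda>i \<omega>. \<not> hk_stable n d \<epsilon> \<delta> x \<and> notst n d \<epsilon> \<delta> (hk_update n d \<epsilon> x i) (stl \<omega>) s) (shd \<omega>) \<omega>) \<in> measurable (hk_space n) (count_space UNIV)"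
  proof (rule measurable_compose_countable'[OF _ g])
    fix i :: nat
    show "(\<lambda>\<omega>. \<not> hk_stable n d \<epsilon> \<delta> x \<and> notst n d \<epsilon> \<delta> (hk_update n d \<epsilon> x i) (stl \<omega>) s) \<in> measurable (hk_space n) (count_space UNIV)"
      using Suc.IH[of "hk_update n d \<epsilon> x i"] measurable_stl unfolding hk_space_def
      by measurable
  qed simp
  then show ?case by (simp add: notst_Suc)
qed



lemma int_pmf_unif:
  fixes n :: nat and a :: "nat \<Rightarrow> real"
  assumes n: "n \<ge> 1" and nn: "\<And>v. a v \<ge> 0"
  shows "(\<integral>\<^sup>+v. ennreal (a v) \<partial>measure_pmf (pmf_of_set {..<n})) = ennreal ((\<Sum>v<n. a v) / n)"
proof -
  have ne: "{..<n} \<noteq> {}" using n by (auto simp: lessThan_empty_iff)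
  have "(\<integral>\<^sup>+v. ennreal (a v) \<partial>measure_pmf (pmf_of_set {..<n})) = (\<Sum>v<n. ennreal (a v) * ennreal (1 / n))"
  proof -
    have sp: "set_pmf (pmf_of_set {..<n}) = {..<n}" using ne by (intro set_pmf_of_set) auto
    have fin: "finite (set_pmf (pmf_of_set {..<n}))" unfolding sp by simp
    show ?thesis by (subst nn_integral_measure_pmf_finite[OF fin]) (auto simp: sp ne intro!: sum.cong)
  qed
  also have "\<dots> = (\<Sum>v<n. ennreal (a v / n))"
    by (rule sum.cong) (auto simp: ennreal_mult'[symmetric] nn)
  also have "\<dots> = ennreal (\<Sum>v<n. a v / n)"
    by (rule sum_ennreal) (auto simp: nn)
  also have "(\<Sum>v<n. a v / n) = (\<Sum>v<n. a v) / n" by (simp add: sum_divide_distrib)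
  finally show ?thesis .
qed

lemma J_bound:
  fixes \<Phi> :: "(nat \<Rightarrow> nat \<Rightarrow> real) \<Rightarrow> real" and L :: real
  assumes n: "n \<ge> 1" and L: "L > 0" and nn: "\<And>x. \<Phi> x \<ge> 0"
    and dec: "\<And>x. \<not> hk_stable n d \<epsilon> \<delta> x \<Longrightarrow> L + (\<Sum>v<n. \<Phi> (hk_update n d \<epsilon> x v)) / n \<le> \<Phi> x"
  shows "(\<integral>\<^sup>+\<omega>. (\<Sum>s<t. if notst n d \<epsilon> \<delta> x \<omega> s then 1 else 0 :: ennreal) \<partial>hk_space n) \<le> ennreal (\<Phi> x / L)"
proof (induction t arbitrary: x)
  case 0 then show ?case by simp
next
  case (Suc t)
  let ?M = "measure_pmf (pmf_of_set {..<n})"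
  interpret S: prob_space "hk_space n" unfolding hk_space_def by (rule prob_space.prob_space_stream_space[OF prob_space_measure_pmf])
  define f where "f = (\<lambda>y \<omega>. (\<Sum>s<t. if notst n d \<epsilon> \<delta> y \<omega> s then 1 else 0 :: ennreal))"
  have fm[measurable]: "f y \<in> borel_measurable (hk_space n)" for y unfolding f_def by measurable
  show ?case
  proof (cases "hk_stable n d \<epsilon> \<delta> x")
    case True
    then have "\<not> notst n d \<epsilon> \<delta> x \<omega> s" for \<omega> s by (cases s) (auto simp: notst_0 notst_Suc)
    then show ?thesis by simp
  next
    case False
    have eq: "(\<Sum>s<Suc t. if notst n d \<epsilon> \<delta> x \<omega> s then 1 else 0 :: ennreal)
       = 1 + f (hk_update n d \<epsilon> x (shd \<omega>)) (stl \<omega>)" for \<omega>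
      unfolding f_def by (subst sum.lessThan_Suc_shift) (simp add: notst_0 notst_Suc False)
    have gm: "(\<lambda>\<omega>. f (hk_update n d \<epsilon> x (shd \<omega>)) (stl \<omega>)) \<in> borel_measurable (hk_space n)"
      unfolding f_def by measurable
    have "(\<integral>\<^sup>+\<omega>. (\<Sum>s<Suc t. if notst n d \<epsilon> \<delta> x \<omega> s then 1 else 0 :: ennreal) \<partial>hk_space n)
       = (\<integral>\<^sup>+\<omega>. 1 \<partial>hk_space n) + (\<integral>\<^sup>+\<omega>. f (hk_update n d \<epsilon> x (shd \<omega>)) (stl \<omega>) \<partial>hk_space n)"
      unfolding eq by (rule nn_integral_add) (use gm in auto)
    also have "(\<integral>\<^sup>+\<omega>. 1 \<partial>hk_space n) = 1" by (simp add: S.emeasure_space_1)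
    also have "(\<integral>\<^sup>+\<omega>. f (hk_update n d \<epsilon> x (shd \<omega>)) (stl \<omega>) \<partial>hk_space n)
       = (\<integral>\<^sup>+v. (\<integral>\<^sup>+\<omega>. f (hk_update n d \<epsilon> x v) \<omega> \<partial>hk_space n) \<partial>?M)"
      using prob_space.nn_integral_stream_space[OF prob_space_measure_pmf gm[unfolded hk_space_def]] unfolding hk_space_def by simp
    also have "\<dots> \<le> (\<integral>\<^sup>+v. ennreal (\<Phi> (hk_update n d \<epsilon> x v) / L) \<partial>?M)"
      by (rule nn_integral_mono) (use Suc.IH in \<open>simp add: f_def\<close>)
    also have "\<dots> = ennreal ((\<Sum>v<n. \<Phi> (hk_update n d \<epsilon> x v) / L) / n)"
      by (rule int_pmf_unif) (use n L nn in auto)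
    also have "1 + \<dots> = ennreal (1 + (\<Sum>v<n. \<Phi> (hk_update n d \<epsilon> x v) / L) / n)"
      by (subst ennreal_plus) (use nn L in \<open>auto intro!: sum_nonneg divide_nonneg_nonneg\<close>)
    also have "\<dots> \<le> ennreal (\<Phi> x / L)"
    proof (rule ennreal_leI)
      have "(\<Sum>v<n. \<Phi> (hk_update n d \<epsilon> x v) / L) / n = ((\<Sum>v<n. \<Phi> (hk_update n d \<epsilon> x v)) / n) / L"
        by (simp add: sum_divide_distrib[symmetric])
      also have "1 + \<dots> = (L + (\<Sum>v<n. \<Phi> (hk_update n d \<epsilon> x v)) / n) / L"
        using L by (simp add: field_simps)
      also have "\<dots> \<le> \<Phi> x / L" using dec[OF False] L by (simp add: divide_right_mono)
      finally show "1 + (\<Sum>v<n. \<Phi> (hk_update n d \<epsilon> x v) / L) / n \<le> \<Phi> x / L" .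
    qed
    finally show ?thesis by (simp add: add_mono)
  qed
qed

lemma expect_bound:
  fixes \<Phi> :: "(nat \<Rightarrow> nat \<Rightarrow> real) \<Rightarrow> real" and L :: real
  assumes n: "n \<ge> 1" and L: "L > 0" and nn: "\<And>x. \<Phi> x \<ge> 0"
    and dec: "\<And>x. \<not> hk_stable n d \<epsilon> \<delta> x \<Longrightarrow> L + (\<Sum>v<n. \<Phi> (hk_update n d \<epsilon> x v)) / n \<le> \<Phi> x"
  shows "(\<integral>\<^sup>+\<omega>. hk_time n d \<epsilon> \<delta> x \<omega> \<partial>hk_space n) \<le> ennreal (\<Phi> x / L)"
proof -
  have "(\<integral>\<^sup>+\<omega>. hk_time n d \<epsilon> \<delta> x \<omega> \<partial>hk_space n)
     = (\<integral>\<^sup>+\<omega>. (\<Sum>s. if notst n d \<epsilon> \<delta> x \<omega> s then 1 else 0 :: ennreal) \<partial>hk_space n)"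
    by (simp add: time_eq)
  also have "\<dots> = (\<Sum>s. \<integral>\<^sup>+\<omega>. (if notst n d \<epsilon> \<delta> x \<omega> s then 1 else 0 :: ennreal) \<partial>hk_space n)"
    by (rule nn_integral_suminf) measurable
  also have "\<dots> = (SUP t. \<Sum>s<t. \<integral>\<^sup>+\<omega>. (if notst n d \<epsilon> \<delta> x \<omega> s then 1 else 0 :: ennreal) \<partial>hk_space n)"
    by (rule suminf_eq_SUP)
  also have "\<dots> \<le> ennreal (\<Phi> x / L)"
  proof (rule SUP_least)
    fix t
    have "(\<Sum>s<t. \<integral>\<^sup>+\<omega>. (if notst n d \<epsilon> \<delta> x \<omega> s then 1 else 0 :: ennreal) \<partial>hk_space n)
       = (\<integral>\<^sup>+\<omega>. (\<Sum>s<t. if notst n d \<epsilon> \<delta> x \<omega> s then 1 else 0 :: ennreal) \<partial>hk_space n)"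
      by (rule nn_integral_sum[symmetric]) measurable
    also have "\<dots> \<le> ennreal (\<Phi> x / L)" by (rule J_bound[OF n L nn dec])
    finally show "(\<Sum>s<t. \<integral>\<^sup>+\<omega>. (if notst n d \<epsilon> \<delta> x \<omega> s then 1 else 0 :: ennreal) \<partial>hk_space n) \<le> ennreal (\<Phi> x / L)" .
  qed
  finally show ?thesis .
qed



definition sqd :: "nat \<Rightarrow> (nat \<Rightarrow> real) \<Rightarrow> (nat \<Rightarrow> real) \<Rightarrow> real" where
  "sqd d p q = (\<Sum>i<d. (p i - q i)^2)"

lemma sqd_nonneg: "sqd d p q \<ge> 0" unfolding sqd_def by (auto intro: sum_nonneg)
lemma sqd_sym: "sqd d p q = sqd d q p" unfolding sqd_def by (simp add: power2_commute)
lemma sqd_self[simp]: "sqd d p p = 0" unfolding sqd_def by simp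

lemma sqd_tri: "sqd d a b \<le> 2 * sqd d a c + 2 * sqd d c b"
proof -
  have "(a i - b i)^2 \<le> 2 * (a i - c i)^2 + 2 * (c i - b i)^2" for i
  proof -
    have "2 * (a i - c i)^2 + 2 * (c i - b i)^2 - (a i - b i)^2 = (a i - 2 * c i + b i)^2"
      by (simp add: power2_eq_square algebra_simps)
    moreover have "(a i - 2 * c i + b i)^2 \<ge> 0" by simp
    ultimately show ?thesis by linarith
  qed
  then have "sqd d a b \<le> (\<Sum>i<d. 2 * (a i - c i)^2 + 2 * (c i - b i)^2)"
    unfolding sqd_def by (rule sum_mono)
  also have "\<dots> = 2 * sqd d a c + 2 * sqd d c b"
    unfolding sqd_def by (simp add: sum.distrib sum_distrib_left)
  finally show ?thesis .
qed

lemma dist_le_iff: "\<epsilon> \<ge> 0 \<Longrightarrow> hk_dist d p q \<le> \<epsilon> \<longleftrightarrow> sqd d p q \<le> \<epsilon>^2"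
proof -
  assume e: "\<epsilon> \<ge> 0"
  have "\<epsilon> = sqrt (\<epsilon>^2)" using e by simp
  then have "hk_dist d p q \<le> \<epsilon> \<longleftrightarrow> sqrt (sqd d p q) \<le> sqrt (\<epsilon>^2)"
    unfolding hk_dist_def sqd_def by simp
  also have "\<dots> \<longleftrightarrow> sqd d p q \<le> \<epsilon>^2" by (rule real_sqrt_le_iff)
  finally show ?thesis .
qed

lemma dist_gt_iff: "\<delta> \<ge> 0 \<Longrightarrow> hk_dist d p q > \<delta> \<longleftrightarrow> sqd d p q > \<delta>^2"
  using dist_le_iff[of \<delta> d p q] by linarith

lemma nbhd_eq: "\<epsilon> \<ge> 0 \<Longrightarrow> hk_nbhd n d \<epsilon> x v = {u\<in>{..<n}. sqd d (x u) (x v) \<le> \<epsilon>^2}"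
  unfolding hk_nbhd_def by (auto simp: dist_le_iff)

lemma nbhd_fin: "finite (hk_nbhd n d \<epsilon> x v)" unfolding hk_nbhd_def by auto
lemma nbhd_self: "v < n \<Longrightarrow> \<epsilon> \<ge> 0 \<Longrightarrow> v \<in> hk_nbhd n d \<epsilon> x v"
  by (simp add: nbhd_eq)
lemma nbhd_card: "v < n \<Longrightarrow> \<epsilon> \<ge> 0 \<Longrightarrow> card (hk_nbhd n d \<epsilon> x v) \<ge> 1"
  using nbhd_fin nbhd_self by (metis One_nat_def Suc_leI card_gt_0_iff empty_iff)
lemma nbhd_card_le: "card (hk_nbhd n d \<epsilon> x v) \<le> n"
proof -
  have "hk_nbhd n d \<epsilon> x v \<subseteq> {..<n}" unfolding hk_nbhd_def by auto
  then show ?thesis by (metis card_lessThan card_mono finite_lessThan)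
qed

lemma mean_identity:
  fixes N :: "nat set" and x :: "nat \<Rightarrow> nat \<Rightarrow> real"
  assumes fin: "finite N" and ne: "N \<noteq> {}"
  defines "y \<equiv> (\<lambda>i. (\<Sum>u\<in>N. x u i) / real (card N))"
  shows "(\<Sum>b\<in>N. sqd d z (x b) - sqd d y (x b)) = real (card N) * sqd d z y"
proof -
  have k: "real (card N) > 0" using fin ne by (simp add: card_gt_0_iff)
  have ky: "real (card N) * y i = (\<Sum>u\<in>N. x u i)" for i unfolding y_def using k by simp
  have "(\<Sum>b\<in>N. (z i - x b i)^2 - (y i - x b i)^2) = real (card N) * (z i - y i)^2" for i
  proof -
    have "(\<Sum>b\<in>N. (z i - x b i)^2 - (y i - x b i)^2) = (\<Sum>b\<in>N. (z i - y i)^2 + 2 * (z i - y i) * y i - 2 * (z i - y i) * x b i)"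
      by (rule sum.cong) (auto simp: power2_eq_square algebra_simps)
    also have "\<dots> = real (card N) * (z i - y i)^2 + 2 * (z i - y i) * (real (card N) * y i) - 2 * (z i - y i) * (\<Sum>b\<in>N. x b i)"
      by (simp add: sum.distrib sum_subtractf sum_distrib_left[symmetric] algebra_simps)
    also have "\<dots> = real (card N) * (z i - y i)^2" by (simp add: ky)
    finally show ?thesis .
  qed
  note per = this
  have "(\<Sum>b\<in>N. sqd d z (x b) - sqd d y (x b)) = (\<Sum>b\<in>N. \<Sum>i<d. (z i - x b i)^2 - (y i - x b i)^2)"
    unfolding sqd_def by (simp add: sum_subtractf)
  also have "\<dots> = (\<Sum>i<d. \<Sum>b\<in>N. (z i - x b i)^2 - (y i - x b i)^2)" by (rule sum.swap)
  also have "\<dots> = (\<Sum>i<d. real (card N) * (z i - y i)^2)" by (simp add: per)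
  also have "\<dots> = real (card N) * sqd d z y" unfolding sqd_def by (simp add: sum_distrib_left)
  finally show ?thesis .
qed



definition pot :: "nat \<Rightarrow> nat \<Rightarrow> real \<Rightarrow> (nat \<Rightarrow> nat \<Rightarrow> real) \<Rightarrow> real" where
  "pot n d \<epsilon> x = (\<Sum>a<n. \<Sum>b<n. min (sqd d (x a) (x b)) (\<epsilon>^2))"

lemma pot_nonneg: "pot n d \<epsilon> x \<ge> 0"
  unfolding pot_def by (intro sum_nonneg) (simp add: sqd_nonneg)

lemma pot_le: "pot n d \<epsilon> x \<le> real n ^ 2 * \<epsilon>^2"
proof -
  have "pot n d \<epsilon> x \<le> (\<Sum>a<n. \<Sum>b<n. \<epsilon>^2)"
    unfolding pot_def by (intro sum_mono) simp
  also have "\<dots> = real n ^ 2 * \<epsilon>^2" by (simp add: power2_eq_square)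
  finally show ?thesis .
qed

lemma update_eq: "hk_update n d \<epsilon> x v = x(v := hk_update n d \<epsilon> x v v)"
  unfolding hk_update_def by simp

lemma pot_dec:
  assumes v: "v < n" and e: "\<epsilon> > 0"
  shows "pot n d \<epsilon> x - pot n d \<epsilon> (hk_update n d \<epsilon> x v)
     \<ge> 2 * real (card (hk_nbhd n d \<epsilon> x v)) * sqd d (x v) (hk_update n d \<epsilon> x v v)"
proof -
  define N where "N = hk_nbhd n d \<epsilon> x v"
  define y where "y = hk_update n d \<epsilon> x v v"
  define x' where "x' = hk_update n d \<epsilon> x v"
  have x'eq: "x' = x(v := y)" unfolding x'_def y_def by (rule update_eq)
  have yeq: "y = (\<lambda>i. (\<Sum>u\<in>N. x u i) / real (card N))" unfolding y_def N_def hk_update_def by simp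
  have Neq: "N = {u\<in>{..<n}. sqd d (x u) (x v) \<le> \<epsilon>^2}" unfolding N_def using e by (simp add: nbhd_eq)
  have finN: "finite N" unfolding N_def by (rule nbhd_fin)
  have vN: "v \<in> N" unfolding N_def using v e by (simp add: nbhd_self)
  define F where "F = (\<lambda>p q. min (sqd d p q) (\<epsilon>^2))"
  define G where "G = (\<lambda>b. if b \<in> N then sqd d (x v) (x b) - sqd d y (x b) else 0)"
  define H where "H = (\<lambda>a b. (if a = v \<and> b \<noteq> v then G b else 0) + (if b = v \<and> a \<noteq> v then G a else 0))"
  have Gb: "F (x v) (x b) - F y (x b) \<ge> G b" if bn: "b < n" for b
  proof (cases "b \<in> N")
    case True
    then have "sqd d (x v) (x b) \<le> \<epsilon>^2" using Neq sqd_sym by auto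
    then show ?thesis using True unfolding F_def G_def by auto
  next
    case False
    then have "sqd d (x v) (x b) > \<epsilon>^2" using Neq sqd_sym bn by fastforce
    then show ?thesis using False unfolding F_def G_def by auto
  qed
  have termb: "F (x a) (x b) - F (x' a) (x' b) \<ge> H a b" if ab: "a < n" "b < n" for a b
  proof -
    consider "a = v \<and> b = v" | "a = v \<and> b \<noteq> v" | "a \<noteq> v \<and> b = v" | "a \<noteq> v \<and> b \<noteq> v" by blast
    then show ?thesis
    proof cases
      case 1 then show ?thesis unfolding H_def F_def x'eq by (simp add: e)
    next
      case 2 then show ?thesis using Gb[of b] ab unfolding H_def x'eq by simp
    next
      case 3 then show ?thesis using Gb[of a] ab unfolding H_def x'eq F_def by (simp add: sqd_sym)
    next
      case 4 then show ?thesis unfolding H_def x'eq by simp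
    qed
  qed
  have "pot n d \<epsilon> x - pot n d \<epsilon> x' = (\<Sum>a<n. \<Sum>b<n. F (x a) (x b) - F (x' a) (x' b))"
    unfolding pot_def F_def by (simp add: sum_subtractf)
  also have "\<dots> \<ge> (\<Sum>a<n. \<Sum>b<n. H a b)"
    by (intro sum_mono termb) auto
  finally have 1: "pot n d \<epsilon> x - pot n d \<epsilon> x' \<ge> (\<Sum>a<n. \<Sum>b<n. H a b)" .
  have "(\<Sum>a<n. \<Sum>b<n. H a b) = (\<Sum>a<n. \<Sum>b<n. if a = v \<and> b \<noteq> v then G b else 0) + (\<Sum>a<n. \<Sum>b<n. if b = v \<and> a \<noteq> v then G a else 0)"
    unfolding H_def by (simp add: sum.distrib)
  also have "(\<Sum>a<n. \<Sum>b<n. if a = v \<and> b \<noteq> v then G b else 0) = (\<Sum>b<n. if b \<noteq> v then G b else 0)"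
  proof -
    have "(\<Sum>a<n. \<Sum>b<n. if a = v \<and> b \<noteq> v then G b else 0) = (\<Sum>a<n. if a = v then (\<Sum>b<n. if b \<noteq> v then G b else 0) else 0)"
      by (rule sum.cong) auto
    also have "\<dots> = (\<Sum>b<n. if b \<noteq> v then G b else 0)" using v by simp
    finally show ?thesis .
  qed
  also have "(\<Sum>a<n. \<Sum>b<n. if b = v \<and> a \<noteq> v then G a else 0) = (\<Sum>a<n. if a \<noteq> v then G a else 0)"
    by (rule sum.cong) (use v in auto)
  finally have 2: "(\<Sum>a<n. \<Sum>b<n. H a b) = 2 * (\<Sum>b<n. if b \<noteq> v then G b else 0)" by simp
  have "(\<Sum>b<n. G b) = (\<Sum>b\<in>N. sqd d (x v) (x b) - sqd d y (x b))"
  proof -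
    have "(\<Sum>b\<in>N. sqd d (x v) (x b) - sqd d y (x b)) = (\<Sum>b\<in>{b\<in>{..<n}. b \<in> N}. sqd d (x v) (x b) - sqd d y (x b))"
      by (rule sum.cong) (auto simp: Neq)
    also have "\<dots> = (\<Sum>b<n. G b)" unfolding G_def by (rule sum.inter_filter) simp
    finally show ?thesis by simp
  qed
  also have "\<dots> = real (card N) * sqd d (x v) y"
    unfolding yeq by (rule mean_identity[OF finN]) (use vN in auto)
  finally have 3: "(\<Sum>b<n. G b) = real (card N) * sqd d (x v) y" .
  have "(\<Sum>b<n. G b) = (\<Sum>b<n. if b \<noteq> v then G b else 0) + G v"
  proof -
    have "(\<Sum>b<n. G b) = (\<Sum>b<n. (if b \<noteq> v then G b else 0) + (if b = v then G b else 0))"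
      by (rule sum.cong) auto
    also have "\<dots> = (\<Sum>b<n. if b \<noteq> v then G b else 0) + G v" using v by (simp add: sum.distrib)
    finally show ?thesis .
  qed
  moreover have "G v = - sqd d y (x v)" unfolding G_def using vN by simp
  ultimately have "(\<Sum>b<n. if b \<noteq> v then G b else 0) \<ge> real (card N) * sqd d (x v) y"
    using 3 sqd_nonneg[of d y "x v"] by linarith
  then have "2 * real (card N) * sqd d (x v) y \<le> pot n d \<epsilon> x - pot n d \<epsilon> x'" using 1 2 by linarith
  then show ?thesis unfolding N_def y_def x'_def .
qed



lemma clamp_mono:
  fixes K p q :: real
  assumes K: "K \<ge> 0"
  shows "(p - q) * (max 0 (min p K) - max 0 (min q K)) \<ge> (max 0 (min p K) - max 0 (min q K))^2"
proof -
  define f where "f = (\<lambda>p::real. max 0 (min p K))"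
  have key: "0 \<le> f p' - f q' \<and> f p' - f q' \<le> p' - q'" if "q' \<le> p'" for p' q'
    using that K unfolding f_def by (auto simp: max_def min_def)
  show ?thesis
  proof (cases "q \<le> p")
    case True
    then have "f p - f q \<le> p - q" "0 \<le> f p - f q" using key by auto
    then have "(f p - f q) * (f p - f q) \<le> (p - q) * (f p - f q)" by (rule mult_right_mono)
    then show ?thesis unfolding f_def by (simp add: power2_eq_square)
  next
    case False
    then have "f q - f p \<le> q - p" "0 \<le> f q - f p" using key by auto
    then have "(f q - f p) * (f q - f p) \<le> (q - p) * (f q - f p)" by (rule mult_right_mono)
    then show ?thesis unfolding f_def by (simp add: power2_eq_square algebra_simps)
  qed
qed

lemma amgm:
  fixes t s f :: real
  assumes t: "t > 0"
  shows "s * f \<le> (t * s^2 + f^2 / t) / 2"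
proof -
  have "0 \<le> (t * s - f)^2" by simp
  then have "2 * t * (s * f) \<le> t * (t * s^2) + f^2" by (simp add: power2_eq_square algebra_simps)
  then have "2 * t * (s * f) \<le> t * (t * s^2 + f^2 / t)" using t by (simp add: algebra_simps)
  then have "2 * (s * f) \<le> t * s^2 + f^2 / t" using t by (simp add: mult.assoc)
  then show ?thesis by simp
qed

lemma sum_over_nbhd:
  assumes "\<epsilon> \<ge> 0"
  shows "(\<Sum>c\<in>hk_nbhd n d \<epsilon> x a. f c) = (\<Sum>c<n. if sqd d (x a) (x c) \<le> \<epsilon>^2 then f c else 0)"
proof -
  have "(\<Sum>c\<in>hk_nbhd n d \<epsilon> x a. f c) = (\<Sum>c\<in>{c\<in>{..<n}. sqd d (x a) (x c) \<le> \<epsilon>^2}. f c)"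
    using assms by (simp add: nbhd_eq sqd_sym)
  also have "\<dots> = (\<Sum>c<n. if sqd d (x a) (x c) \<le> \<epsilon>^2 then f c else 0)"
    by (rule sum.inter_filter) simp
  finally show ?thesis .
qed



lemma case2:
  assumes e: "\<epsilon> > 0" and u: "u < n" and v: "v < n" and b: "b < n"
    and hv: "sqd d (x v) (x u) \<le> \<epsilon>^2 / 4" and hb: "sqd d (x b) (x v) \<le> \<epsilon>^2"
    and hbu: "sqd d (x b) (x u) > \<epsilon>^2 / 4"
  shows "(\<Sum>a<n. real (card (hk_nbhd n d \<epsilon> x a)) * sqd d (x a) (hk_update n d \<epsilon> x a a)) \<ge> \<epsilon>^2 / (64 * real n ^ 2)"
proof -
  define N where "N = hk_nbhd n d \<epsilon> x"
  define m where "m = (\<lambda>a. hk_update n d \<epsilon> x a a)"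
  define k where "k = (\<lambda>a. real (card (N a)))"
  define Q where "Q = (\<Sum>a<n. k a * sqd d (x a) (m a))"
  define \<rho> where "\<rho> = \<epsilon> / 2"
  have \<rho>: "\<rho> > 0" "\<rho>^2 = \<epsilon>^2/4" unfolding \<rho>_def using e by (auto simp: power2_eq_square)
  define e where "e = (\<lambda>i. x b i - x u i)"
  define L2 where "L2 = sqd d (x b) (x u)"
  have L2e: "L2 = (\<Sum>i<d. e i * e i)" unfolding L2_def sqd_def e_def by (simp add: power2_eq_square)
  have L2gt: "L2 > \<rho>^2" using hbu \<rho> unfolding L2_def by simp
  define sL where "sL = sqrt L2"
  have sL: "sL > \<rho>" unfolding sL_def using L2gt \<rho>(1) by (simp add: real_less_rsqrt)
  have sL2: "sL * sL = L2" unfolding sL_def L2_def using sqd_nonneg[of d "x b" "x u"] by simp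
  define K where "K = sL * \<rho>"
  have Kpos: "K > 0" unfolding K_def using sL \<rho> by simp
  have KL: "K < L2" unfolding K_def using sL \<rho> sL2 by (metis mult_strict_left_mono less_trans)
  have K2: "K^2 = L2 * \<rho>^2" unfolding K_def using sL2 by (simp add: power2_eq_square algebra_simps)
  define p where "p = (\<lambda>a. \<Sum>i<d. e i * (x a i - x u i))"
  define \<phi> where "\<phi> = (\<lambda>a. max 0 (min (p a) K))"
  have pu: "p u = 0" unfolding p_def by simp
  have pb: "p b = L2" unfolding p_def L2e e_def by simp
  have \<phi>u: "\<phi> u = 0" unfolding \<phi>_def pu using Kpos by simp
  have \<phi>b: "\<phi> b = K" unfolding \<phi>_def pb using Kpos KL by simp
  have \<phi>bnd: "0 \<le> \<phi> a" "\<phi> a \<le> K" for a unfolding \<phi>_def using Kpos by auto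
  define A where "A = (\<lambda>a c. sqd d (x a) (x c) \<le> \<epsilon>^2)"
  have Asym: "A a c = A c a" for a c unfolding A_def by (simp add: sqd_sym)
  define T where "T = (\<lambda>a c. if A a c then (p a - p c) * (\<phi> a - \<phi> c) else 0)"
  have TA: "A a c \<Longrightarrow> T a c \<ge> (\<phi> a - \<phi> c)^2" for a c
    unfolding T_def \<phi>_def using clamp_mono[of K "p a" "p c"] Kpos by simp
  have Tnn: "T a c \<ge> 0" for a c
    using TA[of a c] unfolding T_def by (cases "A a c") (auto intro: order_trans[OF zero_le_power2])
  define h where "h = (\<lambda>a. \<Sum>c\<in>N a. p a - p c)"
  define X where "X = (\<Sum>a<n. h a * \<phi> a)"
  have hsum: "h a = (\<Sum>c<n. if A a c then p a - p c else 0)" for a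
    unfolding h_def N_def A_def using e by (simp add: sum_over_nbhd)
  have X1: "X = (\<Sum>a<n. \<Sum>c<n. if A a c then (p a - p c) * \<phi> a else 0)"
    unfolding X_def hsum sum_distrib_right by (intro sum.cong refl) auto
  have X2: "X = (\<Sum>a<n. \<Sum>c<n. if A a c then (p c - p a) * \<phi> c else 0)"
  proof -
    have "(\<Sum>a<n. \<Sum>c<n. if A a c then (p c - p a) * \<phi> c else 0) = (\<Sum>c<n. \<Sum>a<n. if A a c then (p c - p a) * \<phi> c else 0)"
      by (rule sum.swap)
    also have "\<dots> = (\<Sum>c<n. \<Sum>a<n. if A c a then (p c - p a) * \<phi> c else 0)"
      by (simp add: Asym)
    finally show ?thesis using X1 by simp
  qed
  have X2T: "2 * X = (\<Sum>a<n. \<Sum>c<n. T a c)"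
  proof -
    have "2 * X = (\<Sum>a<n. \<Sum>c<n. if A a c then (p a - p c) * \<phi> a else 0) + (\<Sum>a<n. \<Sum>c<n. if A a c then (p c - p a) * \<phi> c else 0)"
      using X1 X2 by simp
    also have "\<dots> = (\<Sum>a<n. \<Sum>c<n. T a c)"
      unfolding T_def by (simp add: sum.distrib[symmetric] algebra_simps cong: if_cong) (intro sum.cong refl, auto simp: algebra_simps)
    finally show ?thesis .
  qed
  have row: "(\<Sum>c<n. T a c) \<ge> T a c'" if "c' < n" for a c'
    using that by (intro member_le_sum) (auto simp: Tnn)
  have rownn: "(\<Sum>c<n. T a c) \<ge> 0" for a by (intro sum_nonneg) (simp add: Tnn)
  have Auv: "A u v"
  proof -
    have "\<epsilon>^2/4 \<le> \<epsilon>^2" by simp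
    then show ?thesis unfolding A_def using hv sqd_sym[of d "x u" "x v"] by linarith
  qed
  have Avb: "A v b" unfolding A_def using hb by (simp add: sqd_sym)
  have low: "2 * X \<ge> K^2 / 2"
  proof (cases "v = u")
    case True
    have "(\<Sum>a<n. \<Sum>c<n. T a c) \<ge> (\<Sum>c<n. T u c)"
      using u by (intro member_le_sum) (auto simp: rownn)
    also have "(\<Sum>c<n. T u c) \<ge> T u b" by (rule row[OF b])
    also have "T u b \<ge> (\<phi> u - \<phi> b)^2" using TA Avb True by simp
    finally have "K^2 \<le> (\<Sum>a<n. \<Sum>c<n. T a c)" using \<phi>u \<phi>b by simp
    moreover have "K^2 \<ge> 0" by simp
    ultimately show ?thesis using X2T by linarith
  next
    case False
    have "(\<Sum>a<n. \<Sum>c<n. T a c) \<ge> (\<Sum>a\<in>{u,v}. \<Sum>c<n. T a c)"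
      using u v by (intro sum_mono2) (auto simp: rownn)
    also have "(\<Sum>a\<in>{u,v}. \<Sum>c<n. T a c) = (\<Sum>c<n. T u c) + (\<Sum>c<n. T v c)" using False by simp
    finally have 1: "(\<Sum>a<n. \<Sum>c<n. T a c) \<ge> (\<Sum>c<n. T u c) + (\<Sum>c<n. T v c)" .
    have "(\<Sum>c<n. T u c) \<ge> (\<phi> u - \<phi> v)^2" using row[OF v, of u] TA[OF Auv] by linarith
    moreover have "(\<Sum>c<n. T v c) \<ge> (\<phi> v - \<phi> b)^2" using row[OF b, of v] TA[OF Avb] by linarith
    moreover have "(\<phi> u - \<phi> v)^2 + (\<phi> v - \<phi> b)^2 \<ge> K^2 / 2"
    proof -
      have "(\<phi> u - \<phi> v)^2 + (\<phi> v - \<phi> b)^2 - K^2/2 = ((\<phi> u - \<phi> v) - (\<phi> v - \<phi> b))^2 / 2"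
        using \<phi>u \<phi>b by (simp add: power2_eq_square field_simps)
      moreover have "((\<phi> u - \<phi> v) - (\<phi> v - \<phi> b))^2 / 2 \<ge> 0" by simp
      ultimately show ?thesis by linarith
    qed
    ultimately show ?thesis using 1 X2T by linarith
  qed
  define t where "t = 4 * real n ^ 2"
  have npos: "real n > 0" using u by simp
  have tpos: "t > 0" unfolding t_def using npos by simp
  have up_a: "h a * \<phi> a \<le> (t * L2 * (k a * sqd d (x a) (m a)) + real n * K^2 / t) / 2" if a: "a < n" for a
  proof -
    have finN: "finite (N a)" unfolding N_def by (rule nbhd_fin)
    have kpos: "k a \<ge> 1" unfolding k_def N_def using nbhd_card[OF a, of \<epsilon> d x] e by simp
    have kle: "k a \<le> real n" unfolding k_def N_def using nbhd_card_le by simp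
    have meq: "m a i = (\<Sum>c\<in>N a. x c i) / k a" for i unfolding m_def N_def k_def hk_update_def by simp
    have sumx: "(\<Sum>c\<in>N a. x c i) = k a * m a i" for i using meq kpos by simp
    define \<sigma> where "\<sigma> = (\<Sum>i<d. e i * (x a i - m a i))"
    have "(\<Sum>c\<in>N a. p c) = (\<Sum>i<d. \<Sum>c\<in>N a. e i * (x c i - x u i))"
      unfolding p_def by (rule sum.swap)
    also have "\<dots> = (\<Sum>i<d. e i * ((\<Sum>c\<in>N a. x c i) - k a * x u i))"
      unfolding k_def by (simp add: sum_distrib_left[symmetric] sum_subtractf)
    also have "\<dots> = k a * (\<Sum>i<d. e i * (m a i - x u i))"
      by (simp add: sumx sum_distrib_left algebra_simps)
    finally have sp: "(\<Sum>c\<in>N a. p c) = k a * (\<Sum>i<d. e i * (m a i - x u i))" .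
    have "h a = k a * p a - (\<Sum>c\<in>N a. p c)"
      unfolding h_def k_def by (simp add: sum_subtractf)
    also have "\<dots> = k a * p a - k a * (\<Sum>i<d. e i * (m a i - x u i))" by (simp only: sp)
    also have "\<dots> = k a * (p a - (\<Sum>i<d. e i * (m a i - x u i)))" by (simp add: algebra_simps)
    also have "p a - (\<Sum>i<d. e i * (m a i - x u i)) = \<sigma>"
      unfolding \<sigma>_def p_def by (simp add: sum_subtractf[symmetric] algebra_simps)
    finally have hk: "h a = k a * \<sigma>" .
    have cs: "\<sigma>^2 \<le> L2 * sqd d (x a) (m a)"
      unfolding \<sigma>_def L2e sqd_def using Cauchy_Schwarz_ineq_sum[of e "\<lambda>i. x a i - m a i" "{..<d}"]
      by (simp add: power2_eq_square)
    have "h a * \<phi> a = k a * (\<sigma> * \<phi> a)" by (simp add: hk)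
    also have "\<dots> \<le> k a * ((t * \<sigma>^2 + (\<phi> a)^2 / t) / 2)"
      using amgm[OF tpos, of \<sigma> "\<phi> a"] kpos by (intro mult_left_mono) auto
    also have "\<dots> \<le> k a * ((t * (L2 * sqd d (x a) (m a)) + K^2 / t) / 2)"
    proof -
      have "(\<phi> a)^2 \<le> K^2" using \<phi>bnd[of a] by (intro power_mono) auto
      then have f1: "(\<phi> a)^2 / t \<le> K^2 / t" using tpos by (simp add: divide_right_mono)
      have f2: "t * \<sigma>^2 \<le> t * (L2 * sqd d (x a) (m a))" using cs tpos by simp
      have "(t * \<sigma>^2 + (\<phi> a)^2 / t) / 2 \<le> (t * (L2 * sqd d (x a) (m a)) + K^2 / t) / 2"
        using add_mono[OF f2 f1] by (intro divide_right_mono) auto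
      then show ?thesis using kpos by (intro mult_left_mono) auto
    qed
    also have "\<dots> = (t * L2 * (k a * sqd d (x a) (m a)) + k a * K^2 / t) / 2" by (simp add: algebra_simps)
    also have "\<dots> \<le> (t * L2 * (k a * sqd d (x a) (m a)) + real n * K^2 / t) / 2"
      using kle tpos by (simp add: divide_right_mono mult_right_mono)
    finally show ?thesis .
  qed
  have "X \<le> (\<Sum>a<n. (t * L2 * (k a * sqd d (x a) (m a)) + real n * K^2 / t) / 2)"
    unfolding X_def by (intro sum_mono up_a) auto
  also have "\<dots> = (t * L2 * Q + real n * real n * K^2 / t) / 2"
    unfolding Q_def by (simp add: sum.distrib sum_divide_distrib[symmetric] sum_distrib_left[symmetric])
  finally have up: "X \<le> (t * L2 * Q + real n * real n * K^2 / t) / 2" .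
  have nn: "real n * real n * K^2 / t = K^2 / 4" unfolding t_def using npos by (simp add: power2_eq_square)
  have up2: "X \<le> (t * L2 * Q + K^2 / 4) / 2" using up nn by simp
  have lowX: "K^2 / 4 \<le> X" using low by simp
  have "K^2 / 4 \<le> t * L2 * Q"
  proof -
    define Z where "Z = t * L2 * Q"
    have "X \<le> (Z + K^2/4) / 2" using up2 unfolding Z_def .
    then show ?thesis using lowX unfolding Z_def[symmetric] by (simp add: field_simps)
  qed
  then have h1: "L2 * \<epsilon>^2 / 16 \<le> L2 * (4 * real n ^ 2 * Q)" unfolding K2 \<rho>(2) t_def by (simp add: algebra_simps)
  have h2: "L2 * (\<epsilon>^2 / 16) \<le> L2 * (4 * real n ^ 2 * Q)" using h1 by (simp only: times_divide_eq_right)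
  have L2pos: "0 < L2" using order.strict_trans1[OF zero_le_power2 L2gt] .
  have "\<epsilon>^2 / 16 \<le> 4 * real n ^ 2 * Q" by (rule mult_left_le_imp_le[OF h2 L2pos])
  then have "\<epsilon>^2 / (64 * real n ^ 2) \<le> Q" using npos by (simp add: field_simps)
  then show ?thesis unfolding Q_def k_def m_def N_def .
qed



lemma sum_dec:
  assumes e: "\<epsilon> > 0" and dl: "\<delta> > 0" and ns: "\<not> hk_stable n d \<epsilon> \<delta> x"
  shows "(\<Sum>v<n. pot n d \<epsilon> x - pot n d \<epsilon> (hk_update n d \<epsilon> x v)) \<ge> min (\<delta>^2) (\<epsilon>^2 / (32 * real n ^ 2))"
proof -
  define Dv where "Dv = (\<lambda>a. pot n d \<epsilon> x - pot n d \<epsilon> (hk_update n d \<epsilon> x a))"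
  define N where "N = hk_nbhd n d \<epsilon> x"
  define m where "m = (\<lambda>a. hk_update n d \<epsilon> x a a)"
  have Dge: "Dv a \<ge> 2 * real (card (N a)) * sqd d (x a) (m a)" if "a < n" for a
    unfolding Dv_def N_def m_def using pot_dec[OF that e] by simp
  have kge: "real (card (N a)) \<ge> 1" if "a < n" for a
    unfolding N_def using nbhd_card[OF that, of \<epsilon> d x] e by simp
  have Dnn: "Dv a \<ge> 0" if "a < n" for a
  proof -
    have "0 \<le> 2 * real (card (N a)) * sqd d (x a) (m a)"
      using kge[OF that] sqd_nonneg[of d "x a" "m a"] by simp
    then show ?thesis using Dge[OF that] by linarith
  qed
  obtain u w where u: "u < n" and w: "w < n" and uw: "u \<noteq> w"
    and d1: "hk_dist d (x u) (x w) \<le> \<epsilon>" and d2: "\<not> hk_dist d (x u) (x w) \<le> \<delta>"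
    using ns unfolding hk_stable_def by blast
  have huw: "sqd d (x u) (x w) \<le> \<epsilon>^2" using d1 e by (simp add: dist_le_iff)
  have huw2: "sqd d (x u) (x w) > \<delta>^2" using d2 dl by (simp add: dist_le_iff)
  show ?thesis
  proof (cases "\<exists>v<n. \<exists>b<n. sqd d (x v) (x u) \<le> \<epsilon>^2/4 \<and> sqd d (x b) (x v) \<le> \<epsilon>^2 \<and> sqd d (x b) (x u) > \<epsilon>^2/4")
    case True
    then obtain v b where v: "v < n" and b: "b < n" and hv: "sqd d (x v) (x u) \<le> \<epsilon>^2/4"
      and hb: "sqd d (x b) (x v) \<le> \<epsilon>^2" and hbu: "sqd d (x b) (x u) > \<epsilon>^2/4" by blast
    have Q: "(\<Sum>a<n. real (card (N a)) * sqd d (x a) (m a)) \<ge> \<epsilon>^2 / (64 * real n ^ 2)"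
      unfolding N_def m_def by (rule case2[OF e u v b hv hb hbu])
    have "(\<Sum>v<n. Dv v) \<ge> (\<Sum>a<n. 2 * real (card (N a)) * sqd d (x a) (m a))"
      by (intro sum_mono Dge) auto
    also have "(\<Sum>a<n. 2 * real (card (N a)) * sqd d (x a) (m a)) = 2 * (\<Sum>a<n. real (card (N a)) * sqd d (x a) (m a))"
      by (simp add: sum_distrib_left mult.assoc)
    finally have "(\<Sum>v<n. Dv v) \<ge> 2 * (\<epsilon>^2 / (64 * real n ^ 2))" using Q by linarith
    moreover have "2 * (\<epsilon>^2 / (64 * real n ^ 2)) = \<epsilon>^2 / (32 * real n ^ 2)" by simp
    ultimately show ?thesis unfolding Dv_def by linarith
  next
    case False
    then have C1: "\<And>v b. v < n \<Longrightarrow> b < n \<Longrightarrow> sqd d (x v) (x u) \<le> \<epsilon>^2/4 \<Longrightarrow> sqd d (x b) (x v) \<le> \<epsilon>^2 \<Longrightarrow> sqd d (x b) (x u) \<le> \<epsilon>^2/4"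
      by (meson not_le)
    define Bl where "Bl = {c\<in>{..<n}. sqd d (x c) (x u) \<le> \<epsilon>^2/4}"
    have e4: "\<epsilon>^2/4 \<le> \<epsilon>^2" by simp
    have Nu: "N u = Bl"
    proof
      show "N u \<subseteq> Bl" unfolding N_def Bl_def using e C1[OF u] by (auto simp: nbhd_eq)
      have bl_le: "sqd d (x c) (x u) \<le> \<epsilon>^2" if "sqd d (x c) (x u) \<le> \<epsilon>^2/4" for c
        using that e4 by linarith
      show "Bl \<subseteq> N u" unfolding N_def Bl_def nbhd_eq[OF less_imp_le[OF e]] using bl_le by blast
    qed
    have wBl: "sqd d (x w) (x u) \<le> \<epsilon>^2/4"
      using C1[OF u w] huw by (simp add: sqd_sym)
    have Nw: "N w = Bl"
    proof
      show "N w \<subseteq> Bl" unfolding N_def Bl_def using e C1[OF w] wBl by (auto simp: nbhd_eq)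
      have bw: "sqd d (x c) (x w) \<le> \<epsilon>^2" if "sqd d (x c) (x u) \<le> \<epsilon>^2/4" for c
        using that sqd_tri[of d "x c" "x w" "x u"] wBl sqd_sym[of d "x u" "x w"] by linarith
      show "Bl \<subseteq> N w" unfolding N_def Bl_def nbhd_eq[OF less_imp_le[OF e]] using bw by blast
    qed
    have meq: "m u = m w" unfolding m_def hk_update_def using Nu Nw unfolding N_def by simp
    have "(\<Sum>v<n. Dv v) \<ge> (\<Sum>v\<in>{u,w}. Dv v)"
      using u w by (intro sum_mono2) (auto simp: Dnn)
    also have "(\<Sum>v\<in>{u,w}. Dv v) = Dv u + Dv w" using uw by simp
    finally have 1: "(\<Sum>v<n. Dv v) \<ge> Dv u + Dv w" .
    have "Dv u \<ge> 2 * sqd d (x u) (m u)"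
    proof -
      have "1 * sqd d (x u) (m u) \<le> real (card (N u)) * sqd d (x u) (m u)"
        by (rule mult_right_mono[OF kge[OF u] sqd_nonneg])
      then show ?thesis using Dge[OF u] by simp
    qed
    moreover have "Dv w \<ge> 2 * sqd d (x w) (m u)"
    proof -
      have "1 * sqd d (x w) (m w) \<le> real (card (N w)) * sqd d (x w) (m w)"
        by (rule mult_right_mono[OF kge[OF w] sqd_nonneg])
      then show ?thesis using Dge[OF w] meq by simp
    qed
    moreover have "sqd d (x u) (x w) \<le> 2 * sqd d (x u) (m u) + 2 * sqd d (x w) (m u)"
      using sqd_tri[of d "x u" "x w" "m u"] by (simp add: sqd_sym)
    ultimately have "(\<Sum>v<n. Dv v) \<ge> \<delta>^2" using 1 huw2 by linarith
    then show ?thesis unfolding Dv_def by linarith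
  qed
qed



lemma final_arith:
  fixes n :: nat and \<epsilon> \<delta> P :: real
  assumes n: "n \<ge> 1" and e: "\<epsilon> > 0" and dl: "\<delta> > 0" and P: "P \<le> real n ^ 2 * \<epsilon>^2"
  shows "P / (min (\<delta>^2) (\<epsilon>^2 / (32 * real n ^ 2)) / real n) \<le> 32 * real n ^ 3 * (real n ^ 2 + (\<epsilon> / \<delta>)^2)"
proof -
  define M where "M = min (\<delta>^2) (\<epsilon>^2 / (32 * real n ^ 2))"
  have npos: "real n > 0" using n by simp
  have Mpos: "M > 0" unfolding M_def using e dl npos by simp
  have "P / (M / real n) = P * real n / M" using npos Mpos by (simp add: field_simps)
  also have "\<dots> \<le> real n ^ 2 * \<epsilon>^2 * real n / M"
    using P npos Mpos by (intro divide_right_mono mult_right_mono) auto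
  also have "\<dots> = real n ^ 3 * \<epsilon>^2 / M" by (simp add: power2_eq_square power3_eq_cube)
  also have "\<dots> \<le> 32 * real n ^ 3 * (real n ^ 2 + (\<epsilon> / \<delta>)^2)"
  proof (cases "\<delta>^2 \<le> \<epsilon>^2 / (32 * real n ^ 2)")
    case True
    then have M: "M = \<delta>^2" unfolding M_def by simp
    have "real n ^ 3 * \<epsilon>^2 / M = real n ^ 3 * (\<epsilon> / \<delta>)^2" unfolding M by (simp add: power_divide)
    also have "\<dots> \<le> 32 * real n ^ 3 * (real n ^ 2 + (\<epsilon> / \<delta>)^2)"
      using npos by (simp add: algebra_simps)
    finally show ?thesis .
  next
    case False
    then have M: "M = \<epsilon>^2 / (32 * real n ^ 2)" unfolding M_def by simp
    have "real n ^ 3 * \<epsilon>^2 / M = 32 * real n ^ 3 * real n ^ 2" unfolding M using e npos by (simp add: field_simps)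
    also have "\<dots> \<le> 32 * real n ^ 3 * (real n ^ 2 + (\<epsilon> / \<delta>)^2)"
      using npos by (simp add: algebra_simps)
    finally show ?thesis .
  qed
  finally show ?thesis unfolding M_def .
qed

theorem theorem2:
  "\<exists>C>0. \<forall>(n::nat) (d::nat) (\<epsilon>::real) (\<delta>::real) (x0::nat \<Rightarrow> nat \<Rightarrow> real).
     n \<ge> 1 \<longrightarrow> \<epsilon> > 0 \<longrightarrow> \<delta> > 0 \<longrightarrow>
     (\<integral>\<^sup>+ \<omega>. hk_time n d \<epsilon> \<delta> x0 \<omega> \<partial>hk_space n)
       \<le> ennreal (C * real n ^ 3 * (real n ^ 2 + (\<epsilon> / \<delta>)^2))"
proof (intro exI[of _ 32] conjI allI impI)
  fix n d :: nat and \<epsilon> \<delta> :: real and x0 :: "nat \<Rightarrow> nat \<Rightarrow> real"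
  assume n: "n \<ge> 1" and e: "\<epsilon> > 0" and dl: "\<delta> > 0"
  define L where "L = min (\<delta>^2) (\<epsilon>^2 / (32 * real n ^ 2)) / real n"
  have npos: "real n > 0" using n by simp
  have L: "L > 0" unfolding L_def using e dl npos by simp
  have dec: "L + (\<Sum>v<n. pot n d \<epsilon> (hk_update n d \<epsilon> x v)) / real n \<le> pot n d \<epsilon> x"
    if ns: "\<not> hk_stable n d \<epsilon> \<delta> x" for x
  proof -
    have s: "(\<Sum>v<n. pot n d \<epsilon> x - pot n d \<epsilon> (hk_update n d \<epsilon> x v)) \<ge> min (\<delta>^2) (\<epsilon>^2 / (32 * real n ^ 2))"
      by (rule sum_dec[OF e dl ns])
    have "(\<Sum>v<n. pot n d \<epsilon> x - pot n d \<epsilon> (hk_update n d \<epsilon> x v)) = real n * pot n d \<epsilon> x - (\<Sum>v<n. pot n d \<epsilon> (hk_update n d \<epsilon> x v))"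
      by (simp add: sum_subtractf)
    then have "L * real n + (\<Sum>v<n. pot n d \<epsilon> (hk_update n d \<epsilon> x v)) \<le> pot n d \<epsilon> x * real n"
      using s npos unfolding L_def by (simp add: algebra_simps)
    then show ?thesis using npos by (simp add: field_simps)
  qed
  have "(\<integral>\<^sup>+ \<omega>. hk_time n d \<epsilon> \<delta> x0 \<omega> \<partial>hk_space n) \<le> ennreal (pot n d \<epsilon> x0 / L)"
    by (rule expect_bound[OF n L pot_nonneg dec])
  also have "\<dots> \<le> ennreal (32 * real n ^ 3 * (real n ^ 2 + (\<epsilon> / \<delta>)^2))"
    unfolding L_def by (intro ennreal_leI final_arith[OF n e dl pot_le])
  finally show "(\<integral>\<^sup>+ \<omega>. hk_time n d \<epsilon> \<delta> x0 \<omega> \<partial>hk_space n) \<le> ennreal (32 * real n ^ 3 * (real n ^ 2 + (\<epsilon> / \<delta>)^2))" .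
qed simp


end
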